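(* Let $A$ and $B$ be rings, $f: A\to B$ a ring homomorphism and $J$ a proper ideal of $B$ such that the ideal $f^{-1}(J)$ of $A$ is semicommutative. If $f(A)+J$ is a weak Armendariz ring, then $A\bowtie^{f}J$ is a weak Armendariz ring.
   Context: All rings are associative with identity (not necessarily commutative), ring homomorphisms are unital, and ideals are two-sided. $\mathrm{nil}(R)$ denotes the set of nilpotent elements of a ring $R$. For a ring homomorphism $f:A\to B$ and an ideal $J$ of $B$, the amalgamation is the subring $A\bowtie^{f}J=\{(a,f(a)+j)\mid a\in A,\ j\in J\}$ of $A\times B$; $f(A)+J=\{f(a)+j: a\in A, j\in J\}$ is a subring of $B$. A ring $R$ (possibly without identity, e.g. an ideal regarded as a ring) is semicommutative if for all $a,b\in R$, $ab=0$ implies $aRb=0$. A ring $R$ is weak Armendariz if whenever $p(x)=\sum_{i=0}^n a_ix^i$ and $q(x)=\sum_{j=0}^m b_jx^j$ in $R[x]$ satisfy $p(x)q(x)=0$, then $a_ib_j\in\mathrm{nil}(R)$ for all $i,j$. *)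

theory Defs
  imports "HOL-Algebra.Algebra"
begin

definition nilpotents :: "('a, 'm) ring_scheme \<Rightarrow> 'a set" where
  "nilpotents R = {a \<in> carrier R. \<exists>n::nat. a [^]\<^bsub>R\<^esub> n = \<zero>\<^bsub>R\<^esub>}"

definition semicommutative :: "('a, 'm) ring_scheme \<Rightarrow> bool" where
  "semicommutative R \<longleftrightarrow>
     (\<forall>a\<in>carrier R. \<forall>b\<in>carrier R. a \<otimes>\<^bsub>R\<^esub> b = \<zero>\<^bsub>R\<^esub> \<longrightarrow>
        (\<forall>r\<in>carrier R. a \<otimes>\<^bsub>R\<^esub> r \<otimes>\<^bsub>R\<^esub> b = \<zero>\<^bsub>R\<^esub>))"

definition weak_armendariz :: "('a, 'm) ring_scheme \<Rightarrow> bool" where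
  "weak_armendariz R \<longleftrightarrow>
     (\<forall>p\<in>carrier (UP R). \<forall>q\<in>carrier (UP R).
        p \<otimes>\<^bsub>UP R\<^esub> q = \<zero>\<^bsub>UP R\<^esub> \<longrightarrow>
        (\<forall>i j. coeff (UP R) p i \<otimes>\<^bsub>R\<^esub> coeff (UP R) q j \<in> nilpotents R))"

definition img_plus :: "('a, 'm) ring_scheme \<Rightarrow> ('b, 'n) ring_scheme \<Rightarrow> ('a \<Rightarrow> 'b) \<Rightarrow> 'b set
    \<Rightarrow> ('b, 'n) ring_scheme" where
  "img_plus A B f J = B\<lparr>carrier := {f a \<oplus>\<^bsub>B\<^esub> j | a j. a \<in> carrier A \<and> j \<in> J}\<rparr>"

definition amalgamation :: "('a, 'm) ring_scheme \<Rightarrow> ('b, 'n) ring_scheme \<Rightarrow> ('a \<Rightarrow> 'b) \<Rightarrow> 'b set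
    \<Rightarrow> ('a \<times> 'b) ring" where
  "amalgamation A B f J = \<lparr>
     carrier = {(a, f a \<oplus>\<^bsub>B\<^esub> j) | a j. a \<in> carrier A \<and> j \<in> J},
     Group.monoid.mult = (\<lambda>x y. (fst x \<otimes>\<^bsub>A\<^esub> fst y, snd x \<otimes>\<^bsub>B\<^esub> snd y)),
     one = (\<one>\<^bsub>A\<^esub>, \<one>\<^bsub>B\<^esub>),
     Ring.ring.zero = (\<zero>\<^bsub>A\<^esub>, \<zero>\<^bsub>B\<^esub>),
     Ring.ring.add = (\<lambda>x y. (fst x \<oplus>\<^bsub>A\<^esub> fst y, snd x \<oplus>\<^bsub>B\<^esub> snd y)) \<rparr>"

end

theory Submission
  imports Defs
begin

inductive wrd :: "('a,'m) ring_scheme \<Rightarrow> 'a \<Rightarrow> 'a \<Rightarrow> nat \<Rightarrow> nat \<Rightarrow> 'a \<Rightarrow> bool"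
  for R x y where
  wx: "wrd R x y (Suc 0) 0 x"
| wy: "wrd R x y 0 (Suc 0) y"
| sx: "wrd R x y a b w \<Longrightarrow> wrd R x y (Suc a) b (w \<otimes>\<^bsub>R\<^esub> x)"
| sy: "wrd R x y a b w \<Longrightarrow> wrd R x y a (Suc b) (w \<otimes>\<^bsub>R\<^esub> y)"

lemma wrd_swap: "wrd R x y a b w \<Longrightarrow> wrd R y x b a w"
  by (induction rule: wrd.induct) (auto intro: wrd.intros)

inductive adc :: "('a,'m) ring_scheme \<Rightarrow> 'a \<Rightarrow> 'a \<Rightarrow> nat \<Rightarrow> 'a \<Rightarrow> bool"
  for R x y K where
  aw: "wrd R x y a b w \<Longrightarrow> a + b = K \<Longrightarrow> adc R x y K w"
| ap: "adc R x y K z1 \<Longrightarrow> adc R x y K z2 \<Longrightarrow> adc R x y K (z1 \<oplus>\<^bsub>R\<^esub> z2)"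

context ring
begin

definition nilp :: "'a \<Rightarrow> bool" where "nilp x \<longleftrightarrow> (\<exists>n::nat. x [^] n = \<zero>)"

lemma pow_ge_zero: "x \<in> carrier R \<Longrightarrow> x [^] (n::nat) = \<zero> \<Longrightarrow> n \<le> k \<Longrightarrow> x [^] k = \<zero>"
proof -
  assume h: "x \<in> carrier R" "x [^] n = \<zero>" "n \<le> k"
  have "x [^] n \<otimes> x [^] (k - n) = x [^] k" using nat_pow_mult[of x n "k-n"] h(1,3) by simp
  then have "x [^] k = \<zero> \<otimes> x [^] (k - n)" using h(2) by simp
  then show ?thesis using h(1) by simp
qed

lemma nilpE: "nilp x \<Longrightarrow> x \<in> carrier R \<Longrightarrow> \<exists>n. x [^] Suc n = \<zero>"
  unfolding nilp_def by (metis le_SucI order_refl pow_ge_zero)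

lemma wrd_closed:
  assumes I: "I \<subseteq> carrier R" "\<And>a b. a \<in> I \<Longrightarrow> b \<in> I \<Longrightarrow> a \<otimes> b \<in> I"
    and "x \<in> I" "y \<in> I"
  shows "wrd R x y a b w \<Longrightarrow> w \<in> I"
  by (induction rule: wrd.induct) (use assms in auto)

lemma pow_in_I:
  assumes I: "I \<subseteq> carrier R" "\<And>a b. a \<in> I \<Longrightarrow> b \<in> I \<Longrightarrow> a \<otimes> b \<in> I"
    and "x \<in> I"
  shows "x [^] Suc k \<in> I"
proof (induction k)
  case 0 then show ?case using assms by auto
next
  case (Suc k) then show ?case using assms by (simp del: nat_pow_Suc add: nat_pow_Suc[of x "Suc k"])
qed

lemma wrd_zero:
  assumes I: "I \<subseteq> carrier R" "\<And>a b. a \<in> I \<Longrightarrow> b \<in> I \<Longrightarrow> a \<otimes> b \<in> I"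
    and SC: "\<And>a b r. a \<in> I \<Longrightarrow> b \<in> I \<Longrightarrow> r \<in> I \<Longrightarrow> a \<otimes> b = \<zero> \<Longrightarrow> a \<otimes> r \<otimes> b = \<zero>"
    and xI: "x \<in> I" and yI: "y \<in> I" and xn: "x [^] Suc n = \<zero>"
  shows "wrd R x y a b w \<Longrightarrow> (Suc n \<le> a \<longrightarrow> w = \<zero>) \<and> (a < Suc n \<longrightarrow> w \<otimes> x [^] (Suc n - a) = \<zero>)"
proof (induction rule: wrd.induct)
  case wx
  have xc: "x \<in> carrier R" using I xI by auto
  show ?case
  proof (cases n)
    case 0 then show ?thesis using xn xc by simp
  next
    case (Suc k)
    have "x \<otimes> x [^] (Suc n - Suc 0) = x [^] Suc n" using nat_pow_Suc2[of x n] xc by simp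
    then show ?thesis using xn Suc by simp
  qed
next
  case wy
  have xc: "x \<in> carrier R" using I xI by auto
  have yc: "y \<in> carrier R" using I yI by auto
  show ?case using xn yc by simp
next
  case (sx a b w)
  have xc: "x \<in> carrier R" using I xI by auto
  have wc: "w \<in> carrier R" using wrd_closed[OF I xI yI sx(1)] I by auto
  show ?case
  proof (cases "Suc n \<le> a")
    case True then have "w = \<zero>" using sx(2) by simp
    then show ?thesis using xc True by simp
  next
    case False
    then have e: "w \<otimes> x [^] (Suc n - a) = \<zero>" using sx(2) by simp
    show ?thesis
    proof (cases "Suc n = Suc a")
      case True
      then have "Suc n - a = 1" by simp
      then have "w \<otimes> x = \<zero>" using e xc by simp
      then show ?thesis using True by simp
    next
      case F2: False
      then have "Suc n - a = Suc (Suc n - Suc a)" using False by simp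
      then have "x [^] (Suc n - a) = x \<otimes> x [^] (Suc n - Suc a)"
        using nat_pow_Suc2[of x "Suc n - Suc a"] xc by simp
      then have "w \<otimes> x \<otimes> x [^] (Suc n - Suc a) = \<zero>" using e wc xc by (simp add: m_assoc)
      then show ?thesis using F2 False by simp
    qed
  qed
next
  case (sy a b w)
  have xc: "x \<in> carrier R" using I xI by auto
  have yc: "y \<in> carrier R" using I yI by auto
  have wI: "w \<in> I" using wrd_closed[OF I xI yI sy(1)] .
  show ?case
  proof (cases "Suc n \<le> a")
    case True then have "w = \<zero>" using sy(2) by simp
    then show ?thesis using yc True by simp
  next
    case False
    then have e: "w \<otimes> x [^] (Suc n - a) = \<zero>" using sy(2) by simp
    have k: "Suc n - a = Suc (n - a)" using False by simp
    have pI: "x [^] Suc (n - a) \<in> I" using pow_in_I[OF I xI] .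
    have e2: "w \<otimes> x [^] Suc (n - a) = \<zero>" using e k by simp
    have "w \<otimes> y \<otimes> x [^] Suc (n - a) = \<zero>" using SC[OF wI pI yI e2] .
    then show ?thesis using k False by simp
  qed
qed
end

locale scI = ring R for R (structure) +
  fixes I
  assumes Isub: "I \<subseteq> carrier R"
    and Imul: "\<And>a b. a \<in> I \<Longrightarrow> b \<in> I \<Longrightarrow> a \<otimes> b \<in> I"
    and Iadd: "\<And>a b. a \<in> I \<Longrightarrow> b \<in> I \<Longrightarrow> a \<oplus> b \<in> I"
    and Izero: "\<zero> \<in> I"
    and SC: "\<And>a b r. a \<in> I \<Longrightarrow> b \<in> I \<Longrightarrow> r \<in> I \<Longrightarrow> a \<otimes> b = \<zero> \<Longrightarrow> a \<otimes> r \<otimes> b = \<zero>"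
begin

lemma Ic: "a \<in> I \<Longrightarrow> a \<in> carrier R" using Isub by auto

lemma wz:
  assumes "x \<in> I" "y \<in> I" "x [^] Suc n = \<zero>" "wrd R x y a b w"
  shows "(Suc n \<le> a \<longrightarrow> w = \<zero>) \<and> (a < Suc n \<longrightarrow> w \<otimes> x [^] (Suc n - a) = \<zero>)"
  apply (rule wrd_zero[where I=I])
  using Isub Imul SC assms by auto

lemma pow_Suc0: "x \<in> carrier R \<Longrightarrow> x [^] Suc 0 = x" by simp

lemma L_mulr:
  assumes xI: "x \<in> I" and rI: "r \<in> I" and nx: "nilp x"
  shows "nilp (x \<otimes> r)" "nilp (r \<otimes> x)"
proof -
  have xc: "x \<in> carrier R" and rc: "r \<in> carrier R" using xI rI Ic by auto
  obtain n where xn: "x [^] Suc n = \<zero>" using nilpE[OF nx xc] by auto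
  have w1: "wrd R x r (Suc k) (Suc k) ((x \<otimes> r) [^] Suc k)" for k
  proof (induction k)
    case 0
    have "wrd R x r (Suc 0) (Suc 0) (x \<otimes> r)" using wrd.sy[OF wrd.wx] .
    then show ?case using xc rc by simp
  next
    case (Suc k)
    have "wrd R x r (Suc (Suc k)) (Suc (Suc k)) ((x \<otimes> r) [^] Suc k \<otimes> x \<otimes> r)"
      using wrd.sy[OF wrd.sx[OF Suc]] .
    moreover have "(x \<otimes> r) [^] Suc (Suc k) = (x \<otimes> r) [^] Suc k \<otimes> x \<otimes> r"
      using xc rc by (simp del: nat_pow_Suc add: nat_pow_Suc[of "x \<otimes> r" "Suc k"] m_assoc)
    ultimately show ?case by simp
  qed
  have w2: "wrd R x r (Suc k) (Suc k) ((r \<otimes> x) [^] Suc k)" for k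
  proof (induction k)
    case 0
    have "wrd R x r (Suc 0) (Suc 0) (r \<otimes> x)" using wrd.sx[OF wrd.wy] .
    then show ?case using xc rc by simp
  next
    case (Suc k)
    have "wrd R x r (Suc (Suc k)) (Suc (Suc k)) ((r \<otimes> x) [^] Suc k \<otimes> r \<otimes> x)"
      using wrd.sx[OF wrd.sy[OF Suc]] .
    moreover have "(r \<otimes> x) [^] Suc (Suc k) = (r \<otimes> x) [^] Suc k \<otimes> r \<otimes> x"
      using xc rc by (simp del: nat_pow_Suc add: nat_pow_Suc[of "r \<otimes> x" "Suc k"] m_assoc)
    ultimately show ?case by simp
  qed
  have "(x \<otimes> r) [^] Suc n = \<zero>" using wz[OF xI rI xn w1[of n]] by (simp del: nat_pow_Suc)
  then show "nilp (x \<otimes> r)" unfolding nilp_def by blast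
  have "(r \<otimes> x) [^] Suc n = \<zero>" using wz[OF xI rI xn w2[of n]] by (simp del: nat_pow_Suc)
  then show "nilp (r \<otimes> x)" unfolding nilp_def by blast
qed

lemma adc_closed:
  assumes "x \<in> I" "y \<in> I"
  shows "adc R x y K z \<Longrightarrow> z \<in> I"
  by (induction rule: adc.induct) (auto intro: Iadd wrd_closed[OF Isub Imul assms])

lemma adc_step:
  assumes xI: "x \<in> I" and yI: "y \<in> I"
  shows "adc R x y K z \<Longrightarrow> adc R x y (Suc K) (z \<otimes> (x \<oplus> y))"
proof (induction rule: adc.induct)
  case (aw a b w)
  have wc: "w \<in> carrier R" using wrd_closed[OF Isub Imul xI yI aw(1)] Ic by auto
  have "w \<otimes> (x \<oplus> y) = w \<otimes> x \<oplus> w \<otimes> y" using wc xI yI Ic r_distr by auto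
  moreover have "adc R x y (Suc K) (w \<otimes> x)" using adc.aw[OF wrd.sx[OF aw(1)]] aw(2) by simp
  moreover have "adc R x y (Suc K) (w \<otimes> y)" using adc.aw[OF wrd.sy[OF aw(1)]] aw(2) by simp
  ultimately show ?case using adc.ap by metis
next
  case (ap z1 z2)
  have "z1 \<in> carrier R" "z2 \<in> carrier R" using adc_closed[OF xI yI] ap(1,2) Ic by auto
  then have "(z1 \<oplus> z2) \<otimes> (x \<oplus> y) = z1 \<otimes> (x \<oplus> y) \<oplus> z2 \<otimes> (x \<oplus> y)"
    using xI yI Ic l_distr by auto
  then show ?case using adc.ap[OF ap(3,4)] by simp
qed

lemma adc_pow:
  assumes xI: "x \<in> I" and yI: "y \<in> I"
  shows "adc R x y (Suc K) ((x \<oplus> y) [^] Suc K)"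
proof (induction K)
  case 0
  have a1: "adc R x y (Suc 0) x" by (rule adc.aw[OF wrd.wx]) simp
  have a2: "adc R x y (Suc 0) y" by (rule adc.aw[OF wrd.wy]) simp
  have "adc R x y (Suc 0) (x \<oplus> y)" using adc.ap[OF a1 a2] .
  then show ?case using xI yI Ic by simp
next
  case (Suc K)
  have "(x \<oplus> y) [^] Suc (Suc K) = (x \<oplus> y) [^] Suc K \<otimes> (x \<oplus> y)" by simp
  then show ?case using adc_step[OF xI yI Suc] by simp
qed

lemma adc_zero:
  assumes xI: "x \<in> I" and yI: "y \<in> I" and xn: "x [^] Suc n = \<zero>" and ym: "y [^] Suc m = \<zero>"
  shows "adc R x y (Suc n + Suc m) z \<Longrightarrow> z = \<zero>"
proof (induction rule: adc.induct)
  case (aw a b w)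
  show ?case
  proof (cases "Suc n \<le> a")
    case True then show ?thesis using wz[OF xI yI xn aw(1)] by simp
  next
    case False
    then have "Suc m \<le> b" using aw(2) by simp
    then show ?thesis using wz[OF yI xI ym wrd_swap[OF aw(1)]] by simp
  qed
next
  case (ap z1 z2) then show ?case by simp
qed

lemma L_add:
  assumes xI: "x \<in> I" and yI: "y \<in> I" and nx: "nilp x" and ny: "nilp y"
  shows "nilp (x \<oplus> y)"
proof -
  obtain n where xn: "x [^] Suc n = \<zero>" using nilpE[OF nx] xI Ic by auto
  obtain m where ym: "y [^] Suc m = \<zero>" using nilpE[OF ny] yI Ic by auto
  have "adc R x y (Suc n + Suc m) ((x \<oplus> y) [^] (Suc n + Suc m))"
    using adc_pow[OF xI yI, of "n + Suc m"] by simp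
  then show ?thesis unfolding nilp_def using adc_zero[OF xI yI xn ym] by blast
qed

lemma neg_pow2: "x \<in> carrier R \<Longrightarrow> (\<ominus> x) [^] (2 * (k::nat)) = x [^] (2 * k)"
proof (induction k)
  case 0 then show ?case by simp
next
  case (Suc k)
  have e: "2 * Suc k = Suc (Suc (2 * k))" by simp
  have "(\<ominus> x) [^] (2 * Suc k) = (\<ominus> x) [^] (2 * k) \<otimes> ((\<ominus> x) \<otimes> (\<ominus> x))"
    using Suc.prems by (simp only: e nat_pow_Suc) (simp add: m_assoc)
  also have "\<dots> = x [^] (2 * k) \<otimes> (x \<otimes> x)" using Suc by (simp add: l_minus r_minus minus_minus)
  also have "\<dots> = x [^] (2 * Suc k)" using Suc.prems by (simp only: e nat_pow_Suc) (simp add: m_assoc)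
  finally show ?case .
qed

lemma L_neg: "x \<in> carrier R \<Longrightarrow> nilp x \<Longrightarrow> nilp (\<ominus> x)"
proof -
  assume xc: "x \<in> carrier R" and "nilp x"
  then obtain n where "x [^] (n::nat) = \<zero>" unfolding nilp_def by auto
  then have "x [^] (2 * n) = \<zero>" using pow_ge_zero[OF xc] by simp
  then show ?thesis unfolding nilp_def using neg_pow2[OF xc] by metis
qed

lemma L_pow: "x \<in> carrier R \<Longrightarrow> nilp (x [^] (j::nat)) \<Longrightarrow> nilp x"
  unfolding nilp_def using nat_pow_pow by metis

lemma L_xx: "x \<in> carrier R \<Longrightarrow> nilp (x \<otimes> x) \<Longrightarrow> nilp x"
proof -
  assume xc: "x \<in> carrier R" and h: "nilp (x \<otimes> x)"
  have "x \<otimes> x = x [^] (2::nat)" using xc by (simp add: numeral_2_eq_2)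
  then show ?thesis using L_pow[OF xc, of 2] h by simp
qed

lemma L_rev:
  assumes aI: "a \<in> I" and bI: "b \<in> I" and n: "nilp (a \<otimes> b)"
  shows "nilp (b \<otimes> a)"
proof -
  have abI: "a \<otimes> b \<in> I" using Imul[OF aI bI] .
  have babI: "b \<otimes> (a \<otimes> b) \<in> I" using Imul[OF bI abI] .
  have n1: "nilp (b \<otimes> (a \<otimes> b))" using L_mulr(2)[OF abI bI n] .
  have n2: "nilp (b \<otimes> (a \<otimes> b) \<otimes> a)" using L_mulr(1)[OF babI aI n1] .
  have ac: "a \<in> carrier R" and bc: "b \<in> carrier R" using aI bI Ic by auto
  have e: "b \<otimes> (a \<otimes> b) \<otimes> a = (b \<otimes> a) \<otimes> (b \<otimes> a)" using ac bc by (simp add: m_assoc)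
  have "nilp ((b \<otimes> a) \<otimes> (b \<otimes> a))" using n2 unfolding e .
  then show ?thesis using L_xx[of "b \<otimes> a"] ac bc by blast
qed

lemma nilp_zero: "nilp \<zero>" unfolding nilp_def using pow_Suc0[of \<zero>] by blast

lemma L_sum:
  assumes "finite S"
  shows "(\<And>k. k \<in> S \<Longrightarrow> g k \<in> I) \<Longrightarrow> (\<And>k. k \<in> S \<Longrightarrow> nilp (g k)) \<Longrightarrow>
    finsum R g S \<in> I \<and> nilp (finsum R g S)"
  using assms
proof (induction S rule: finite_induct)
  case empty then show ?case using Izero nilp_zero by simp
next
  case (insert k F)
  have gc: "g \<in> F \<rightarrow> carrier R" "g k \<in> carrier R" using insert.prems Ic by auto
  have e: "finsum R g (insert k F) = g k \<oplus> finsum R g F"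
    using finsum_insert[OF insert.hyps(1,2) gc] .
  have ih: "finsum R g F \<in> I \<and> nilp (finsum R g F)" using insert by auto
  show ?case unfolding e using Iadd L_add ih insert.prems by auto
qed

lemma armendariz_mod_nil:
  fixes \<alpha> \<beta> :: "nat \<Rightarrow> 'a"
  assumes aI: "\<And>k. \<alpha> k \<in> I" and bI: "\<And>k. \<beta> k \<in> I"
    and sum0: "\<And>n. (\<Oplus>k\<in>{..n}. \<alpha> k \<otimes> \<beta> (n - k)) = \<zero>"
  shows "nilp (\<alpha> i \<otimes> \<beta> j)"
proof -
  have ac: "\<And>k. \<alpha> k \<in> carrier R" and bc: "\<And>k. \<beta> k \<in> carrier R" using aI bI Ic by auto
  have main: "\<forall>t. t \<le> n \<longrightarrow> nilp (\<alpha> t \<otimes> \<beta> (n - t))" for n :: nat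
  proof (induction n rule: less_induct)
    case (less n)
    note IHn = less.IH
    have "t \<le> n \<Longrightarrow> nilp (\<alpha> t \<otimes> \<beta> (n - t))" for t
    proof (induction t rule: less_induct)
      case (less t)
      note IHt = less.IH
      define g where "g k = \<alpha> k \<otimes> \<beta> (n - k) \<otimes> \<alpha> t" for k
      have gI: "g k \<in> I" for k unfolding g_def using Imul aI bI by blast
      have gc: "g \<in> A \<rightarrow> carrier R" for A using gI Ic by blast
      have "(\<Oplus>k\<in>{..n}. \<alpha> k \<otimes> \<beta> (n - k)) \<otimes> \<alpha> t = (\<Oplus>k\<in>{..n}. \<alpha> k \<otimes> \<beta> (n - k) \<otimes> \<alpha> t)"
        by (rule finsum_ldistr) (use ac bc in auto)
      then have s0: "finsum R g {..n} = \<zero>" using sum0[of n] ac unfolding g_def by simp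
      have ins: "{..n} = insert t ({..n} - {t})" using less.prems by auto
      have s1: "finsum R g {..n} = g t \<oplus> finsum R g ({..n} - {t})"
        by (subst ins, rule finsum_insert) (use gc gI Ic in auto)
      have rest: "finsum R g ({..n} - {t}) \<in> I \<and> nilp (finsum R g ({..n} - {t}))"
      proof (rule L_sum)
        show "finite ({..n} - {t})" by simp
        show "g k \<in> I" for k using gI .
        fix k assume k: "k \<in> {..n} - {t}"
        show "nilp (g k)"
        proof (cases "k < t")
          case True
          have "nilp (\<alpha> k \<otimes> \<beta> (n - k))" using IHt[OF True] less.prems True by simp
          then show ?thesis unfolding g_def using L_mulr(1)[OF Imul[OF aI bI] aI] by blast
        next
          case False
          then have kt: "t < k" "k \<le> n" using k by auto
          define n' where "n' = t + (n - k)"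
          have "n' < n" using kt unfolding n'_def by simp
          then have h: "\<forall>t'. t' \<le> n' \<longrightarrow> nilp (\<alpha> t' \<otimes> \<beta> (n' - t'))" using IHn by blast
          have "t \<le> n'" unfolding n'_def by simp
          then have "nilp (\<alpha> t \<otimes> \<beta> (n' - t))" using h by blast
          then have "nilp (\<alpha> t \<otimes> \<beta> (n - k))" unfolding n'_def by simp
          then have "nilp (\<beta> (n - k) \<otimes> \<alpha> t)" using L_rev aI bI by blast
          then have "nilp (\<alpha> k \<otimes> (\<beta> (n - k) \<otimes> \<alpha> t))" using L_mulr(2)[OF Imul[OF bI aI] aI] by blast
          then show ?thesis unfolding g_def using ac bc by (simp add: m_assoc)
        qed
      qed
      have "g t \<oplus> finsum R g ({..n} - {t}) = \<zero>" using s0 s1 by simp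
      then have "\<ominus> finsum R g ({..n} - {t}) = g t"
        using minus_equality[of "g t" "finsum R g ({..n} - {t})"] rest gI Ic by blast
      then have ngt: "nilp (g t)" using L_neg rest Ic by metis
      have "nilp (g t \<otimes> \<beta> (n - t))" using L_mulr(1)[OF gI bI ngt] .
      moreover have "g t \<otimes> \<beta> (n - t) = (\<alpha> t \<otimes> \<beta> (n - t)) \<otimes> (\<alpha> t \<otimes> \<beta> (n - t))"
        unfolding g_def using ac bc by (simp add: m_assoc)
      ultimately show ?case using L_xx[of "\<alpha> t \<otimes> \<beta> (n - t)"] ac bc by simp
    qed
    then show ?case by blast
  qed
  have "nilp (\<alpha> i \<otimes> \<beta> (i + j - i))" using main[of "i + j", rule_format, of i] by simp
  then show ?thesis by simp
qed

end


lemma prodJ: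
  assumes "ring B" "ideal J B" "u \<in> carrier B" "v \<in> carrier B" "j \<in> J" "k \<in> J"
  shows "\<exists>j'\<in>J. (u \<oplus>\<^bsub>B\<^esub> j) \<otimes>\<^bsub>B\<^esub> (v \<oplus>\<^bsub>B\<^esub> k) = u \<otimes>\<^bsub>B\<^esub> v \<oplus>\<^bsub>B\<^esub> j'"
proof -
  interpret B: ring B by fact
  interpret J: ideal J B by fact
  have jc: "j \<in> carrier B" "k \<in> carrier B" using assms J.a_subset by auto
  let ?j = "u \<otimes>\<^bsub>B\<^esub> k \<oplus>\<^bsub>B\<^esub> (j \<otimes>\<^bsub>B\<^esub> v \<oplus>\<^bsub>B\<^esub> j \<otimes>\<^bsub>B\<^esub> k)"
  have "?j \<in> J" using assms jc J.I_l_closed J.I_r_closed J.a_closed by simp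
  moreover have "(u \<oplus>\<^bsub>B\<^esub> j) \<otimes>\<^bsub>B\<^esub> (v \<oplus>\<^bsub>B\<^esub> k) = u \<otimes>\<^bsub>B\<^esub> v \<oplus>\<^bsub>B\<^esub> ?j"
    using assms jc by (simp add: B.l_distr B.r_distr B.a_ac)
  ultimately show ?thesis by blast
qed

lemma powJ:
  assumes "ring B" "ideal J B" "u \<in> carrier B" "j \<in> J"
  shows "\<exists>j'\<in>J. (u \<oplus>\<^bsub>B\<^esub> j) [^]\<^bsub>B\<^esub> (n::nat) = u [^]\<^bsub>B\<^esub> n \<oplus>\<^bsub>B\<^esub> j'"
proof (induction n)
  case 0
  interpret B: ring B by fact
  interpret J: ideal J B by fact
  show ?case by (rule bexI[of _ "\<zero>\<^bsub>B\<^esub>"]) auto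
next
  case (Suc n)
  interpret B: ring B by fact
  interpret J: ideal J B by fact
  obtain j' where j': "j' \<in> J" "(u \<oplus>\<^bsub>B\<^esub> j) [^]\<^bsub>B\<^esub> n = u [^]\<^bsub>B\<^esub> n \<oplus>\<^bsub>B\<^esub> j'" using Suc by blast
  obtain j'' where "j'' \<in> J" "(u [^]\<^bsub>B\<^esub> n \<oplus>\<^bsub>B\<^esub> j') \<otimes>\<^bsub>B\<^esub> (u \<oplus>\<^bsub>B\<^esub> j) = u [^]\<^bsub>B\<^esub> n \<otimes>\<^bsub>B\<^esub> u \<oplus>\<^bsub>B\<^esub> j''"
    using prodJ[OF assms(1,2) _ assms(3) j'(1) assms(4)] assms(3) by blast
  then show ?case using j' by auto
qed

lemma amal_simps:
  "carrier (amalgamation A B f J) = {(a, f a \<oplus>\<^bsub>B\<^esub> j) | a j. a \<in> carrier A \<and> j \<in> J}"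
  "x \<otimes>\<^bsub>amalgamation A B f J\<^esub> y = (fst x \<otimes>\<^bsub>A\<^esub> fst y, snd x \<otimes>\<^bsub>B\<^esub> snd y)"
  "x \<oplus>\<^bsub>amalgamation A B f J\<^esub> y = (fst x \<oplus>\<^bsub>A\<^esub> fst y, snd x \<oplus>\<^bsub>B\<^esub> snd y)"
  "\<one>\<^bsub>amalgamation A B f J\<^esub> = (\<one>\<^bsub>A\<^esub>, \<one>\<^bsub>B\<^esub>)"
  "\<zero>\<^bsub>amalgamation A B f J\<^esub> = (\<zero>\<^bsub>A\<^esub>, \<zero>\<^bsub>B\<^esub>)"
  unfolding amalgamation_def by simp_all

lemma amal_pow: "x [^]\<^bsub>amalgamation A B f J\<^esub> (n::nat) = (fst x [^]\<^bsub>A\<^esub> n, snd x [^]\<^bsub>B\<^esub> n)"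
  by (induction n) (simp_all add: amal_simps)

lemma amal_carrier:
  assumes "ring A" "ring B" "f \<in> ring_hom A B" "ideal J B" "x \<in> carrier (amalgamation A B f J)"
  shows "fst x \<in> carrier A" "snd x \<in> carrier B" "\<exists>j\<in>J. snd x = f (fst x) \<oplus>\<^bsub>B\<^esub> j"
proof -
  interpret B: ring B by fact
  interpret J: ideal J B by fact
  obtain a j where "x = (a, f a \<oplus>\<^bsub>B\<^esub> j)" "a \<in> carrier A" "j \<in> J" using assms(5) by (auto simp: amal_simps)
  then show "fst x \<in> carrier A" "snd x \<in> carrier B" "\<exists>j\<in>J. snd x = f (fst x) \<oplus>\<^bsub>B\<^esub> j"
    using ring_hom_closed[OF assms(3)] J.a_subset by auto
qed

lemma amal_abelian_monoid:
  assumes RA: "ring A" and RB: "ring B" and hom: "f \<in> ring_hom A B" and id: "ideal J B"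
  shows "abelian_monoid (amalgamation A B f J)"
proof (rule abelian_monoidI)
  interpret A: ring A by fact
  interpret B: ring B by fact
  interpret J: ideal J B by fact
  note C = amal_carrier[OF RA RB hom id]
  fix x y assume x: "x \<in> carrier (amalgamation A B f J)" and y: "y \<in> carrier (amalgamation A B f J)"
  obtain j where j: "j \<in> J" "snd x = f (fst x) \<oplus>\<^bsub>B\<^esub> j" using C(3)[OF x] by blast
  obtain k where k: "k \<in> J" "snd y = f (fst y) \<oplus>\<^bsub>B\<^esub> k" using C(3)[OF y] by blast
  have fc: "f (fst x) \<in> carrier B" "f (fst y) \<in> carrier B" using C x y ring_hom_closed[OF hom] by auto
  have jc: "j \<in> carrier B" "k \<in> carrier B" using j k J.a_subset by auto
  have "snd x \<oplus>\<^bsub>B\<^esub> snd y = f (fst x \<oplus>\<^bsub>A\<^esub> fst y) \<oplus>\<^bsub>B\<^esub> (j \<oplus>\<^bsub>B\<^esub> k)"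
    using j k fc jc ring_hom_add[OF hom C(1)[OF x] C(1)[OF y]] by (simp add: B.a_ac)
  moreover have "j \<oplus>\<^bsub>B\<^esub> k \<in> J" using j k by simp
  moreover have "fst x \<oplus>\<^bsub>A\<^esub> fst y \<in> carrier A" using C x y by simp
  ultimately show "x \<oplus>\<^bsub>amalgamation A B f J\<^esub> y \<in> carrier (amalgamation A B f J)"
    unfolding amal_simps by blast
next
  interpret A: ring A by fact
  interpret B: ring B by fact
  interpret J: ideal J B by fact
  have "f \<zero>\<^bsub>A\<^esub> = \<zero>\<^bsub>B\<^esub>" using ring_hom_zero[OF hom RA RB] .
  then have "(\<zero>\<^bsub>A\<^esub>, \<zero>\<^bsub>B\<^esub>) = (\<zero>\<^bsub>A\<^esub>, f \<zero>\<^bsub>A\<^esub> \<oplus>\<^bsub>B\<^esub> \<zero>\<^bsub>B\<^esub>)" by simp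
  then show "\<zero>\<^bsub>amalgamation A B f J\<^esub> \<in> carrier (amalgamation A B f J)"
    unfolding amal_simps using J.zero_closed by blast
next
  interpret A: ring A by fact
  interpret B: ring B by fact
  note C = amal_carrier[OF RA RB hom id]
  fix x y z assume "x \<in> carrier (amalgamation A B f J)" "y \<in> carrier (amalgamation A B f J)"
    "z \<in> carrier (amalgamation A B f J)"
  then show "x \<oplus>\<^bsub>amalgamation A B f J\<^esub> y \<oplus>\<^bsub>amalgamation A B f J\<^esub> z =
    x \<oplus>\<^bsub>amalgamation A B f J\<^esub> (y \<oplus>\<^bsub>amalgamation A B f J\<^esub> z)"
    using C by (simp add: amal_simps A.a_assoc B.a_assoc)
next
  interpret A: ring A by fact
  interpret B: ring B by fact
  note C = amal_carrier[OF RA RB hom id]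
  fix x assume "x \<in> carrier (amalgamation A B f J)"
  then show "\<zero>\<^bsub>amalgamation A B f J\<^esub> \<oplus>\<^bsub>amalgamation A B f J\<^esub> x = x"
    using C by (simp add: amal_simps)
next
  interpret A: ring A by fact
  interpret B: ring B by fact
  note C = amal_carrier[OF RA RB hom id]
  fix x y assume "x \<in> carrier (amalgamation A B f J)" "y \<in> carrier (amalgamation A B f J)"
  then show "x \<oplus>\<^bsub>amalgamation A B f J\<^esub> y = y \<oplus>\<^bsub>amalgamation A B f J\<^esub> x"
    using C by (simp add: amal_simps A.a_comm B.a_comm)
qed

lemma amal_finsum:
  assumes RA: "ring A" and RB: "ring B" and hom: "f \<in> ring_hom A B" and id: "ideal J B"
    and fin: "finite S"
  shows "g \<in> S \<rightarrow> carrier (amalgamation A B f J) \<Longrightarrow>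
    finsum (amalgamation A B f J) g S = (finsum A (\<lambda>k. fst (g k)) S, finsum B (\<lambda>k. snd (g k)) S)"
  using fin
proof (induction S rule: finite_induct)
  interpret A: ring A by fact
  interpret B: ring B by fact
  interpret M: abelian_monoid "amalgamation A B f J" using amal_abelian_monoid[OF RA RB hom id] .
  case empty then show ?case by (simp add: amal_simps)
next
  interpret A: ring A by fact
  interpret B: ring B by fact
  interpret M: abelian_monoid "amalgamation A B f J" using amal_abelian_monoid[OF RA RB hom id] .
  note C = amal_carrier[OF RA RB hom id]
  case (insert k F)
  have gc: "g \<in> F \<rightarrow> carrier (amalgamation A B f J)" "g k \<in> carrier (amalgamation A B f J)"
    using insert.prems by auto
  have "finsum (amalgamation A B f J) g (insert k F) = g k \<oplus>\<^bsub>amalgamation A B f J\<^esub> finsum (amalgamation A B f J) g F"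
    using M.finsum_insert[OF insert.hyps(1,2) gc] .
  also have "\<dots> = (fst (g k) \<oplus>\<^bsub>A\<^esub> finsum A (\<lambda>k. fst (g k)) F, snd (g k) \<oplus>\<^bsub>B\<^esub> finsum B (\<lambda>k. snd (g k)) F)"
    using insert gc by (simp add: amal_simps)
  also have "\<dots> = (finsum A (\<lambda>k. fst (g k)) (insert k F), finsum B (\<lambda>k. snd (g k)) (insert k F))"
    using insert.hyps gc C by (simp add: Pi_def A.finsum_insert B.finsum_insert)
  finally show ?case .
qed



lemma ip_simps:
  "carrier (img_plus A B f J) = {f a \<oplus>\<^bsub>B\<^esub> j | a j. a \<in> carrier A \<and> j \<in> J}"
  "x \<otimes>\<^bsub>img_plus A B f J\<^esub> y = x \<otimes>\<^bsub>B\<^esub> y"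
  "x \<oplus>\<^bsub>img_plus A B f J\<^esub> y = x \<oplus>\<^bsub>B\<^esub> y"
  "\<one>\<^bsub>img_plus A B f J\<^esub> = \<one>\<^bsub>B\<^esub>"
  "\<zero>\<^bsub>img_plus A B f J\<^esub> = \<zero>\<^bsub>B\<^esub>"
  unfolding img_plus_def by simp_all

lemma ip_pow: "x [^]\<^bsub>img_plus A B f J\<^esub> (n::nat) = x [^]\<^bsub>B\<^esub> n"
  by (induction n) (simp_all add: ip_simps)

lemma ip_carrier:
  assumes "ring B" "f \<in> ring_hom A B" "ideal J B"
  shows "carrier (img_plus A B f J) \<subseteq> carrier B"
proof -
  interpret B: ring B by fact
  interpret J: ideal J B by fact
  show ?thesis unfolding ip_simps using ring_hom_closed[OF assms(2)] J.a_subset by auto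
qed

lemma ip_abelian_monoid:
  assumes RA: "ring A" and RB: "ring B" and hom: "f \<in> ring_hom A B" and id: "ideal J B"
  shows "abelian_monoid (img_plus A B f J)"
proof (rule abelian_monoidI)
  interpret A: ring A by fact
  interpret B: ring B by fact
  interpret J: ideal J B by fact
  fix x y assume x: "x \<in> carrier (img_plus A B f J)" and y: "y \<in> carrier (img_plus A B f J)"
  obtain a j where aj: "x = f a \<oplus>\<^bsub>B\<^esub> j" "a \<in> carrier A" "j \<in> J" using x unfolding ip_simps by blast
  obtain b k where bk: "y = f b \<oplus>\<^bsub>B\<^esub> k" "b \<in> carrier A" "k \<in> J" using y unfolding ip_simps by blast
  have fc: "f a \<in> carrier B" "f b \<in> carrier B" using aj bk ring_hom_closed[OF hom] by auto
  have jc: "j \<in> carrier B" "k \<in> carrier B" using aj bk J.a_subset by auto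
  have "x \<oplus>\<^bsub>B\<^esub> y = f (a \<oplus>\<^bsub>A\<^esub> b) \<oplus>\<^bsub>B\<^esub> (j \<oplus>\<^bsub>B\<^esub> k)"
    using aj bk fc jc ring_hom_add[OF hom aj(2) bk(2)] by (simp add: B.a_ac)
  moreover have "j \<oplus>\<^bsub>B\<^esub> k \<in> J" "a \<oplus>\<^bsub>A\<^esub> b \<in> carrier A" using aj bk by auto
  ultimately show "x \<oplus>\<^bsub>img_plus A B f J\<^esub> y \<in> carrier (img_plus A B f J)"
    unfolding ip_simps by blast
next
  interpret A: ring A by fact
  interpret B: ring B by fact
  interpret J: ideal J B by fact
  have "f \<zero>\<^bsub>A\<^esub> = \<zero>\<^bsub>B\<^esub>" using ring_hom_zero[OF hom RA RB] .
  then have "\<zero>\<^bsub>B\<^esub> = f \<zero>\<^bsub>A\<^esub> \<oplus>\<^bsub>B\<^esub> \<zero>\<^bsub>B\<^esub>" by simp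
  then show "\<zero>\<^bsub>img_plus A B f J\<^esub> \<in> carrier (img_plus A B f J)"
    unfolding ip_simps using J.zero_closed A.zero_closed by blast
next
  interpret B: ring B by fact
  note C = ip_carrier[OF RB hom id]
  fix x y z assume "x \<in> carrier (img_plus A B f J)" "y \<in> carrier (img_plus A B f J)"
    "z \<in> carrier (img_plus A B f J)"
  then have "x \<in> carrier B" "y \<in> carrier B" "z \<in> carrier B" using C by auto
  then show "x \<oplus>\<^bsub>img_plus A B f J\<^esub> y \<oplus>\<^bsub>img_plus A B f J\<^esub> z =
    x \<oplus>\<^bsub>img_plus A B f J\<^esub> (y \<oplus>\<^bsub>img_plus A B f J\<^esub> z)"
    by (simp add: ip_simps(3) B.a_assoc)
next
  interpret B: ring B by fact
  note C = ip_carrier[OF RB hom id]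
  fix x assume "x \<in> carrier (img_plus A B f J)"
  then show "\<zero>\<^bsub>img_plus A B f J\<^esub> \<oplus>\<^bsub>img_plus A B f J\<^esub> x = x"
    using C by (auto simp add: ip_simps(3,5))
next
  interpret B: ring B by fact
  note C = ip_carrier[OF RB hom id]
  fix x y assume "x \<in> carrier (img_plus A B f J)" "y \<in> carrier (img_plus A B f J)"
  then have "x \<in> carrier B" "y \<in> carrier B" using C by auto
  then show "x \<oplus>\<^bsub>img_plus A B f J\<^esub> y = y \<oplus>\<^bsub>img_plus A B f J\<^esub> x"
    by (simp add: ip_simps(3) B.a_comm)
qed

lemma ip_finsum:
  assumes RA: "ring A" and RB: "ring B" and hom: "f \<in> ring_hom A B" and id: "ideal J B"
    and fin: "finite S"
  shows "g \<in> S \<rightarrow> carrier (img_plus A B f J) \<Longrightarrow> finsum (img_plus A B f J) g S = finsum B g S"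
  using fin
proof (induction S rule: finite_induct)
  interpret B: ring B by fact
  interpret M: abelian_monoid "img_plus A B f J" using ip_abelian_monoid[OF RA RB hom id] .
  case empty then show ?case by (simp add: ip_simps)
next
  interpret B: ring B by fact
  interpret M: abelian_monoid "img_plus A B f J" using ip_abelian_monoid[OF RA RB hom id] .
  note C = ip_carrier[OF RB hom id]
  case (insert k F)
  have gc: "g \<in> F \<rightarrow> carrier (img_plus A B f J)" "g k \<in> carrier (img_plus A B f J)"
    using insert.prems by auto
  have "finsum (img_plus A B f J) g (insert k F) = g k \<oplus>\<^bsub>B\<^esub> finsum B g F"
    using M.finsum_insert[OF insert.hyps(1,2) gc] insert by (simp add: ip_simps)
  also have "\<dots> = finsum B g (insert k F)"
    using insert.hyps gc C by (subst B.finsum_insert) auto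
  finally show ?case .
qed

lemma hom_pow: "f \<in> ring_hom A B \<Longrightarrow> ring A \<Longrightarrow> x \<in> carrier A \<Longrightarrow>
  f (x [^]\<^bsub>A\<^esub> (n::nat)) = f x [^]\<^bsub>B\<^esub> n"
proof (induction n)
  case 0 then show ?case using ring_hom_one by simp
next
  case (Suc n)
  interpret A: ring A by fact
  show ?case using Suc ring_hom_mult[OF Suc.prems(1)] by simp
qed



lemma amal_mult:
  assumes RA: "ring A" and RB: "ring B" and hom: "f \<in> ring_hom A B" and id: "ideal J B"
    and x: "x \<in> carrier (amalgamation A B f J)" and y: "y \<in> carrier (amalgamation A B f J)"
  shows "\<exists>j'\<in>J. snd x \<otimes>\<^bsub>B\<^esub> snd y = f (fst x \<otimes>\<^bsub>A\<^esub> fst y) \<oplus>\<^bsub>B\<^esub> j'"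
    "x \<otimes>\<^bsub>amalgamation A B f J\<^esub> y \<in> carrier (amalgamation A B f J)"
    "snd x \<otimes>\<^bsub>B\<^esub> snd y \<in> carrier (img_plus A B f J)"
proof -
  interpret A: ring A by fact
  interpret B: ring B by fact
  interpret J: ideal J B by fact
  note C = amal_carrier[OF RA RB hom id]
  obtain j where j: "j \<in> J" "snd x = f (fst x) \<oplus>\<^bsub>B\<^esub> j" using C(3)[OF x] by blast
  obtain k where k: "k \<in> J" "snd y = f (fst y) \<oplus>\<^bsub>B\<^esub> k" using C(3)[OF y] by blast
  have fc: "f (fst x) \<in> carrier B" "f (fst y) \<in> carrier B" using C x y ring_hom_closed[OF hom] by auto
  obtain j' where j': "j' \<in> J" "snd x \<otimes>\<^bsub>B\<^esub> snd y = f (fst x) \<otimes>\<^bsub>B\<^esub> f (fst y) \<oplus>\<^bsub>B\<^esub> j'"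
    using prodJ[OF RB id fc j(1) k(1)] j k by auto
  have e: "f (fst x \<otimes>\<^bsub>A\<^esub> fst y) = f (fst x) \<otimes>\<^bsub>B\<^esub> f (fst y)"
    using ring_hom_mult[OF hom] C x y by auto
  show 1: "\<exists>j'\<in>J. snd x \<otimes>\<^bsub>B\<^esub> snd y = f (fst x \<otimes>\<^bsub>A\<^esub> fst y) \<oplus>\<^bsub>B\<^esub> j'" using j' e by auto
  have mc: "fst x \<otimes>\<^bsub>A\<^esub> fst y \<in> carrier A" using C x y by auto
  show "x \<otimes>\<^bsub>amalgamation A B f J\<^esub> y \<in> carrier (amalgamation A B f J)"
    unfolding amal_simps using 1 mc by auto
  show "snd x \<otimes>\<^bsub>B\<^esub> snd y \<in> carrier (img_plus A B f J)"
    unfolding ip_simps using 1 mc by auto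
qed

theorem theorem4p1:
  fixes A :: "('a, 'm) ring_scheme" and B :: "('b, 'n) ring_scheme"
    and f :: "'a \<Rightarrow> 'b" and J :: "'b set"
  assumes "ring A" and "ring B"
    and "f \<in> ring_hom A B"
    and "ideal J B" and "J \<noteq> carrier B"
    and "semicommutative (A\<lparr>carrier := {a \<in> carrier A. f a \<in> J}\<rparr>)"
    and "weak_armendariz (img_plus A B f J)"
  shows "weak_armendariz (amalgamation A B f J)"
proof -
  note RA = assms(1) and RB = assms(2) and hom = assms(3) and id = assms(4)
  interpret A: ring A by fact
  interpret B: ring B by fact
  interpret J: ideal J B by fact
  define Am where "Am = amalgamation A B f J"
  define Ip where "Ip = img_plus A B f J"
  define I where "I = {a \<in> carrier A. f a \<in> J}"
  note C = amal_carrier[OF RA RB hom id, folded Am_def]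
  note MC = amal_mult[OF RA RB hom id, folded Am_def Ip_def]
  have SC0: "semicommutative (A\<lparr>carrier := I\<rparr>)" using assms(6) unfolding I_def .
  have scI: "scI A I"
  proof (intro scI.intro scI_axioms.intro)
    show "ring A" by fact
    show "I \<subseteq> carrier A" unfolding I_def by auto
    show "a \<otimes>\<^bsub>A\<^esub> b \<in> I" if "a \<in> I" "b \<in> I" for a b
      using that ring_hom_mult[OF hom] J.I_r_closed ring_hom_closed[OF hom] unfolding I_def by auto
    show "a \<oplus>\<^bsub>A\<^esub> b \<in> I" if "a \<in> I" "b \<in> I" for a b
      using that ring_hom_add[OF hom] unfolding I_def by auto
    show "\<zero>\<^bsub>A\<^esub> \<in> I" using ring_hom_zero[OF hom RA RB] unfolding I_def by auto
    show "a \<otimes>\<^bsub>A\<^esub> r \<otimes>\<^bsub>A\<^esub> b = \<zero>\<^bsub>A\<^esub>"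
      if "a \<in> I" "b \<in> I" "r \<in> I" "a \<otimes>\<^bsub>A\<^esub> b = \<zero>\<^bsub>A\<^esub>" for a b r
      using SC0 that unfolding semicommutative_def by simp
  qed
  interpret S: scI A I by (rule scI)
  show ?thesis
    unfolding weak_armendariz_def Am_def[symmetric]
  proof (intro ballI impI allI)
    fix P Q i j
    assume P: "P \<in> carrier (UP Am)" and Q: "Q \<in> carrier (UP Am)"
      and PQ: "P \<otimes>\<^bsub>UP Am\<^esub> Q = \<zero>\<^bsub>UP Am\<^esub>"
    have Pup: "P \<in> up Am" and Qup: "Q \<in> up Am" using P Q by (simp_all add: UP_def)
    have Pc: "P k \<in> carrier Am" and Qc: "Q k \<in> carrier Am" for k using Pup Qup by (auto simp: up_def)
    have coeffs: "coeff (UP Am) P i = P i" "coeff (UP Am) Q j = Q j" using Pup Qup by (simp_all add: UP_def)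
    have sumAm: "finsum Am (\<lambda>k. P k \<otimes>\<^bsub>Am\<^esub> Q (n - k)) {..n} = \<zero>\<^bsub>Am\<^esub>" for n
    proof -
      have "(\<lambda>n. finsum Am (\<lambda>k. P k \<otimes>\<^bsub>Am\<^esub> Q (n - k)) {..n}) = (\<lambda>i. \<zero>\<^bsub>Am\<^esub>)"
        using PQ Pup Qup by (simp add: UP_def)
      then show ?thesis by (rule fun_cong)
    qed
    have gAm: "(\<lambda>k. P k \<otimes>\<^bsub>Am\<^esub> Q (n - k)) \<in> S' \<rightarrow> carrier Am" for n S' using MC(2) Pc Qc by auto
    have sums: "finsum A (\<lambda>k. fst (P k) \<otimes>\<^bsub>A\<^esub> fst (Q (n - k))) {..n} = \<zero>\<^bsub>A\<^esub> \<and>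
      finsum B (\<lambda>k. snd (P k) \<otimes>\<^bsub>B\<^esub> snd (Q (n - k))) {..n} = \<zero>\<^bsub>B\<^esub>" for n
      using sumAm[of n] amal_finsum[OF RA RB hom id, folded Am_def, OF _ gAm, of "{..n}" n]
      by (simp add: amal_simps Am_def)
    define pB where "pB k = snd (P k)" for k
    define qB where "qB k = snd (Q k)" for k
    have pBc: "pB k \<in> carrier Ip" and qBc: "qB k \<in> carrier Ip" for k
    proof -
      obtain j1 where "j1 \<in> J" "snd (P k) = f (fst (P k)) \<oplus>\<^bsub>B\<^esub> j1" using C(3)[OF Pc] by blast
      then show "pB k \<in> carrier Ip" using C(1)[OF Pc] unfolding pB_def Ip_def ip_simps by blast
      obtain j2 where "j2 \<in> J" "snd (Q k) = f (fst (Q k)) \<oplus>\<^bsub>B\<^esub> j2" using C(3)[OF Qc] by blast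
      then show "qB k \<in> carrier Ip" using C(1)[OF Qc] unfolding qB_def Ip_def ip_simps by blast
    qed
    have pBup: "pB \<in> up Ip" and qBup: "qB \<in> up Ip"
    proof -
      obtain m where m: "bound \<zero>\<^bsub>Am\<^esub> m P" using Pup by (auto simp: up_def)
      then have "bound \<zero>\<^bsub>Ip\<^esub> m pB" unfolding bound_def pB_def Ip_def by (simp add: amal_simps ip_simps Am_def)
      then show "pB \<in> up Ip" using pBc by (auto simp: up_def)
      obtain m' where m': "bound \<zero>\<^bsub>Am\<^esub> m' Q" using Qup by (auto simp: up_def)
      then have "bound \<zero>\<^bsub>Ip\<^esub> m' qB" unfolding bound_def qB_def Ip_def by (simp add: amal_simps ip_simps Am_def)
      then show "qB \<in> up Ip" using qBc by (auto simp: up_def)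
    qed
    have pqB: "pB \<otimes>\<^bsub>UP Ip\<^esub> qB = \<zero>\<^bsub>UP Ip\<^esub>"
    proof -
      have "finsum Ip (\<lambda>k. pB k \<otimes>\<^bsub>Ip\<^esub> qB (n - k)) {..n} = \<zero>\<^bsub>Ip\<^esub>" for n
      proof -
        have g: "(\<lambda>k. pB k \<otimes>\<^bsub>Ip\<^esub> qB (n - k)) \<in> {..n} \<rightarrow> carrier Ip"
          using MC(3) Pc Qc unfolding pB_def qB_def by (auto simp: Ip_def ip_simps)
        have "finsum Ip (\<lambda>k. pB k \<otimes>\<^bsub>Ip\<^esub> qB (n - k)) {..n} = finsum B (\<lambda>k. pB k \<otimes>\<^bsub>Ip\<^esub> qB (n - k)) {..n}"
          using ip_finsum[OF RA RB hom id, folded Ip_def, OF _ g] by simp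
        also have "\<dots> = \<zero>\<^bsub>B\<^esub>" using sums[of n] unfolding pB_def qB_def by (simp add: Ip_def ip_simps)
        finally show ?thesis by (simp add: Ip_def ip_simps)
      qed
      then show ?thesis using pBup qBup by (simp add: UP_def)
    qed
    have "coeff (UP Ip) pB i \<otimes>\<^bsub>Ip\<^esub> coeff (UP Ip) qB j \<in> nilpotents Ip"
      using assms(7)[folded Ip_def] pBup qBup pqB unfolding weak_armendariz_def by (simp add: UP_def)
    then obtain m where m: "(snd (P i) \<otimes>\<^bsub>B\<^esub> snd (Q j)) [^]\<^bsub>B\<^esub> (m::nat) = \<zero>\<^bsub>B\<^esub>"
      using pBup qBup unfolding nilpotents_def pB_def qB_def by (auto simp: UP_def Ip_def ip_simps ip_pow)
    define a where "a k = fst (P k)" for k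
    define b where "b k = fst (Q k)" for k
    have ac: "a k \<in> carrier A" and bc: "b k \<in> carrier A" for k using C(1) Pc Qc unfolding a_def b_def by auto
    define c where "c = a i \<otimes>\<^bsub>A\<^esub> b j"
    have cc: "c \<in> carrier A" unfolding c_def using ac bc by simp
    obtain j3 where j3: "j3 \<in> J" "snd (P i) \<otimes>\<^bsub>B\<^esub> snd (Q j) = f c \<oplus>\<^bsub>B\<^esub> j3"
      using MC(1)[OF Pc Qc] unfolding c_def a_def b_def by blast
    have fcc: "f c \<in> carrier B" using ring_hom_closed[OF hom cc] .
    obtain j4 where j4: "j4 \<in> J" "(f c \<oplus>\<^bsub>B\<^esub> j3) [^]\<^bsub>B\<^esub> m = f c [^]\<^bsub>B\<^esub> m \<oplus>\<^bsub>B\<^esub> j4"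
      using powJ[OF RB id fcc j3(1)] by blast
    have "f (c [^]\<^bsub>A\<^esub> m) \<oplus>\<^bsub>B\<^esub> j4 = \<zero>\<^bsub>B\<^esub>"
      using m j3 j4 hom_pow[OF hom RA cc] by simp
    then have "\<ominus>\<^bsub>B\<^esub> j4 = f (c [^]\<^bsub>A\<^esub> m)"
      using B.minus_equality[of "f (c [^]\<^bsub>A\<^esub> m)" j4] j4(1) J.a_subset ring_hom_closed[OF hom] cc by auto
    moreover have "\<ominus>\<^bsub>B\<^esub> j4 \<in> J" using J.a_inv_closed j4(1) by blast
    ultimately have "f (c [^]\<^bsub>A\<^esub> m) \<in> J" by simp
    then have uI: "c [^]\<^bsub>A\<^esub> m \<in> I" unfolding I_def using cc by auto
    define u where "u = c [^]\<^bsub>A\<^esub> m"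
    have uc: "u \<in> carrier A" using uI unfolding I_def u_def by auto
    define \<alpha> where "\<alpha> k = u \<otimes>\<^bsub>A\<^esub> a k" for k
    define \<beta> where "\<beta> k = b k \<otimes>\<^bsub>A\<^esub> u" for k
    have \<alpha>I: "\<alpha> k \<in> I" for k
      using uI ac[of k] ring_hom_mult[OF hom] J.I_r_closed ring_hom_closed[OF hom] unfolding I_def \<alpha>_def u_def by auto
    have \<beta>I: "\<beta> k \<in> I" for k
      using uI bc[of k] ring_hom_mult[OF hom] J.I_l_closed ring_hom_closed[OF hom] unfolding I_def \<beta>_def u_def by auto
    have sum0: "(\<Oplus>\<^bsub>A\<^esub>k\<in>{..n}. \<alpha> k \<otimes>\<^bsub>A\<^esub> \<beta> (n - k)) = \<zero>\<^bsub>A\<^esub>" for n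
    proof -
      have hc: "(\<lambda>k. a k \<otimes>\<^bsub>A\<^esub> b (n - k)) \<in> {..n} \<rightarrow> carrier A" using ac bc by auto
      have e1: "u \<otimes>\<^bsub>A\<^esub> (\<Oplus>\<^bsub>A\<^esub>k\<in>{..n}. a k \<otimes>\<^bsub>A\<^esub> b (n - k)) = (\<Oplus>\<^bsub>A\<^esub>k\<in>{..n}. u \<otimes>\<^bsub>A\<^esub> (a k \<otimes>\<^bsub>A\<^esub> b (n - k)))"
        using A.finsum_rdistr[OF _ uc hc] by simp
      have e2: "(\<Oplus>\<^bsub>A\<^esub>k\<in>{..n}. u \<otimes>\<^bsub>A\<^esub> (a k \<otimes>\<^bsub>A\<^esub> b (n - k))) \<otimes>\<^bsub>A\<^esub> u =
        (\<Oplus>\<^bsub>A\<^esub>k\<in>{..n}. u \<otimes>\<^bsub>A\<^esub> (a k \<otimes>\<^bsub>A\<^esub> b (n - k)) \<otimes>\<^bsub>A\<^esub> u)"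
        using A.finsum_ldistr[of "{..n}" u] uc ac bc by auto
      have e3: "(\<Oplus>\<^bsub>A\<^esub>k\<in>{..n}. u \<otimes>\<^bsub>A\<^esub> (a k \<otimes>\<^bsub>A\<^esub> b (n - k)) \<otimes>\<^bsub>A\<^esub> u) =
        (\<Oplus>\<^bsub>A\<^esub>k\<in>{..n}. \<alpha> k \<otimes>\<^bsub>A\<^esub> \<beta> (n - k))"
        using uc ac bc unfolding \<alpha>_def \<beta>_def by (intro A.finsum_cong') (auto simp: A.m_assoc)
      have e4: "(\<Oplus>\<^bsub>A\<^esub>k\<in>{..n}. a k \<otimes>\<^bsub>A\<^esub> b (n - k)) = \<zero>\<^bsub>A\<^esub>"
        using sums[of n] unfolding a_def b_def by simp
      have "(\<Oplus>\<^bsub>A\<^esub>k\<in>{..n}. \<alpha> k \<otimes>\<^bsub>A\<^esub> \<beta> (n - k)) =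
        (u \<otimes>\<^bsub>A\<^esub> (\<Oplus>\<^bsub>A\<^esub>k\<in>{..n}. a k \<otimes>\<^bsub>A\<^esub> b (n - k))) \<otimes>\<^bsub>A\<^esub> u"
        unfolding e1 e2 e3 ..
      also have "\<dots> = \<zero>\<^bsub>A\<^esub>" unfolding e4 using uc by simp
      finally show ?thesis .
    qed
    have "A.nilp (\<alpha> i \<otimes>\<^bsub>A\<^esub> \<beta> j)" by (rule S.armendariz_mod_nil[OF \<alpha>I \<beta>I sum0])
    moreover have "\<alpha> i \<otimes>\<^bsub>A\<^esub> \<beta> j = c [^]\<^bsub>A\<^esub> (Suc m + m)"
    proof -
      have "\<alpha> i \<otimes>\<^bsub>A\<^esub> \<beta> j = u \<otimes>\<^bsub>A\<^esub> c \<otimes>\<^bsub>A\<^esub> u"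
        unfolding \<alpha>_def \<beta>_def c_def using uc ac bc by (simp add: A.m_assoc)
      also have "\<dots> = c [^]\<^bsub>A\<^esub> Suc m \<otimes>\<^bsub>A\<^esub> c [^]\<^bsub>A\<^esub> m" unfolding u_def by simp
      also have "\<dots> = c [^]\<^bsub>A\<^esub> (Suc m + m)" by (rule A.nat_pow_mult[OF cc])
      finally show ?thesis .
    qed
    ultimately have "A.nilp c" using S.L_pow[OF cc] by metis
    then obtain n1 where n1: "c [^]\<^bsub>A\<^esub> (n1::nat) = \<zero>\<^bsub>A\<^esub>" unfolding A.nilp_def by auto
    have yc: "snd (P i) \<otimes>\<^bsub>B\<^esub> snd (Q j) \<in> carrier B" using C(2) Pc Qc by auto
    have "c [^]\<^bsub>A\<^esub> (n1 + m) = \<zero>\<^bsub>A\<^esub>" using A.pow_ge_zero[OF cc n1] by simp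
    moreover have "(snd (P i) \<otimes>\<^bsub>B\<^esub> snd (Q j)) [^]\<^bsub>B\<^esub> (n1 + m) = \<zero>\<^bsub>B\<^esub>"
      using B.pow_ge_zero[OF yc m] by simp
    moreover have "P i \<otimes>\<^bsub>Am\<^esub> Q j = (c, snd (P i) \<otimes>\<^bsub>B\<^esub> snd (Q j))"
      unfolding c_def a_def b_def Am_def by (simp add: amal_simps)
    ultimately have "(P i \<otimes>\<^bsub>Am\<^esub> Q j) [^]\<^bsub>Am\<^esub> (n1 + m) = \<zero>\<^bsub>Am\<^esub>"
      unfolding Am_def by (simp add: amal_pow amal_simps)
    then show "coeff (UP Am) P i \<otimes>\<^bsub>Am\<^esub> coeff (UP Am) Q j \<in> nilpotents Am"
      unfolding coeffs nilpotents_def using MC(2)[OF Pc Qc] by blast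
  qed
qed


end
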